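(* Let $\mathbf G_*=(\partial:G_1\to G_0)$ be a crossed module. Then $\mathbf Z_0(\mathbf G_* )$ is a subgroup of $\mathrm{Der}_{G_0}(G_0,G_1)$, and there is a commutative diagram with exact rows $$0\to\mathsf H^0(G_0,\mathbf G_* )\to G_1\xrightarrow{\delta}\mathrm{Der}_{G_0}(G_0,G_1)\to\mathsf H^1(G_0,\mathbf G_* )\to 1,$$ $$0\to\pi_1(\mathbf Z_*(\mathbf G_* ))\to G_1\xrightarrow{\delta}\mathbf Z_0(\mathbf G_* )\to\pi_0(\mathbf Z_*(\mathbf G_* ))\to 1,$$ in which the vertical maps are an isomorphism $\pi_1(\mathbf Z_*(\mathbf G_* ))\cong\mathsf H^0(G_0,\mathbf G_* )$, the identity of $G_1$, the inclusion $\mathbf Z_0(\mathbf G_* )\subseteq\mathrm{Der}_{G_0}(G_0,G_1)$ and an injective map $\pi_0(\mathbf Z_*(\mathbf G_* ))\to\mathsf H^1(G_0,\mathbf G_* )$.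
   Context: A crossed module $\mathbf G_*$: groups $G_1,G_0$, a homomorphism $\partial:G_1\to G_0$ and a left action $(x,a)\mapsto{}^xa$ of $G_0$ on $G_1$ by automorphisms, with $\partial({}^x a)=x\partial(a)x^{-1}$ and ${}^{\partial(b)}a=bab^{-1}$. Commutators $[x,t]=xtx^{-1}t^{-1}$. $\mathsf H^0(G_0,\mathbf G_* )=\{a\in G_1:\partial a=1,\ {}^xa=a\ \forall x\in G_0\}$. $\mathrm{Der}_{G_0}(G_0,G_1)$ is the set of pairs $(g,\gamma)$, $g\in G_0$, $\gamma:G_0\to G_1$ with $\gamma(st)=\gamma(s)\,{}^s\gamma(t)$ and $\partial\gamma(t)=[g,t]$; it is a group under $(g,\gamma)(g',\gamma')=(gg',\ t\mapsto{}^g\gamma'(t)\,\gamma(t))$. $\mathsf H^1(G_0,\mathbf G_* )$ is $\mathrm{Der}_{G_0}(G_0,G_1)$ modulo the relation $(g,\gamma)\sim(g',\gamma')$ iff there is $a\in G_1$ with $g'=\partial(a)^{-1}g$ and $\gamma'(t)=a^{-1}\gamma(t)\,{}^ta$ for all $t$. $\mathbf Z_0(\mathbf G_* )$ is the set of $(x,\xi)\in\mathrm{Der}_{G_0}(G_0,G_1)$ additionally satisfying $\xi(\partial a)={}^xa\,a^{-1}$ for all $a\in G_1$. $\delta(c)=(\partial c,\ t\mapsto c\,({}^tc)^{-1})$; $\pi_1(\mathbf Z_*(\mathbf G_* ))=\ker\delta$, $\pi_0(\mathbf Z_*(\mathbf G_* ))=\mathbf Z_0(\mathbf G_* )/\mathrm{Im}\delta$.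 *)

theory Defs
  imports "HOL-Algebra.Algebra"
begin

definition crossed_module ::
  "('a, 'c) monoid_scheme \<Rightarrow> ('b, 'd) monoid_scheme \<Rightarrow> ('a \<Rightarrow> 'b) \<Rightarrow> ('b \<Rightarrow> 'a \<Rightarrow> 'a) \<Rightarrow> bool" where
  "crossed_module G1 G0 bd act \<longleftrightarrow>
     group G1 \<and> group G0 \<and> bd \<in> hom G1 G0 \<and>
     (\<forall>x\<in>carrier G0. act x \<in> iso G1 G1) \<and>
     (\<forall>a\<in>carrier G1. act \<one>\<^bsub>G0\<^esub> a = a) \<and>
     (\<forall>x\<in>carrier G0. \<forall>y\<in>carrier G0. \<forall>a\<in>carrier G1.
        act (x \<otimes>\<^bsub>G0\<^esub> y) a = act x (act y a)) \<and>
     (\<forall>x\<in>carrier G0. \<forall>a\<in>carrier G1.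
        bd (act x a) = x \<otimes>\<^bsub>G0\<^esub> bd a \<otimes>\<^bsub>G0\<^esub> inv\<^bsub>G0\<^esub> x) \<and>
     (\<forall>a\<in>carrier G1. \<forall>b\<in>carrier G1.
        act (bd b) a = b \<otimes>\<^bsub>G1\<^esub> a \<otimes>\<^bsub>G1\<^esub> inv\<^bsub>G1\<^esub> b)"

definition commutator :: "('b, 'd) monoid_scheme \<Rightarrow> 'b \<Rightarrow> 'b \<Rightarrow> 'b" where
  "commutator G x t = x \<otimes>\<^bsub>G\<^esub> t \<otimes>\<^bsub>G\<^esub> inv\<^bsub>G\<^esub> x \<otimes>\<^bsub>G\<^esub> inv\<^bsub>G\<^esub> t"

definition Der ::
  "('a, 'c) monoid_scheme \<Rightarrow> ('b, 'd) monoid_scheme \<Rightarrow> ('a \<Rightarrow> 'b) \<Rightarrow> ('b \<Rightarrow> 'a \<Rightarrow> 'a)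
   \<Rightarrow> ('b \<times> ('b \<Rightarrow> 'a)) set" where
  "Der G1 G0 bd act = {(g, \<gamma>). g \<in> carrier G0 \<and> \<gamma> \<in> carrier G0 \<rightarrow>\<^sub>E carrier G1 \<and>
     (\<forall>s\<in>carrier G0. \<forall>t\<in>carrier G0. \<gamma> (s \<otimes>\<^bsub>G0\<^esub> t) = \<gamma> s \<otimes>\<^bsub>G1\<^esub> act s (\<gamma> t)) \<and>
     (\<forall>t\<in>carrier G0. bd (\<gamma> t) = commutator G0 g t)}"

definition DerGrp ::
  "('a, 'c) monoid_scheme \<Rightarrow> ('b, 'd) monoid_scheme \<Rightarrow> ('a \<Rightarrow> 'b) \<Rightarrow> ('b \<Rightarrow> 'a \<Rightarrow> 'a)
   \<Rightarrow> ('b \<times> ('b \<Rightarrow> 'a)) monoid" where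
  "DerGrp G1 G0 bd act =
     \<lparr> carrier = Der G1 G0 bd act,
       monoid.mult = (\<lambda>(g, \<gamma>) (g', \<gamma>'). (g \<otimes>\<^bsub>G0\<^esub> g',
                 \<lambda>t\<in>carrier G0. act g (\<gamma>' t) \<otimes>\<^bsub>G1\<^esub> \<gamma> t)),
       monoid.one = (\<one>\<^bsub>G0\<^esub>, \<lambda>t\<in>carrier G0. \<one>\<^bsub>G1\<^esub>) \<rparr>"

definition H0 ::
  "('a, 'c) monoid_scheme \<Rightarrow> ('b, 'd) monoid_scheme \<Rightarrow> ('a \<Rightarrow> 'b) \<Rightarrow> ('b \<Rightarrow> 'a \<Rightarrow> 'a) \<Rightarrow> 'a set" where
  "H0 G1 G0 bd act = {a \<in> carrier G1. bd a = \<one>\<^bsub>G0\<^esub> \<and> (\<forall>x\<in>carrier G0. act x a = a)}"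

definition der_rel ::
  "('a, 'c) monoid_scheme \<Rightarrow> ('b, 'd) monoid_scheme \<Rightarrow> ('a \<Rightarrow> 'b) \<Rightarrow> ('b \<Rightarrow> 'a \<Rightarrow> 'a)
   \<Rightarrow> (('b \<times> ('b \<Rightarrow> 'a)) \<times> ('b \<times> ('b \<Rightarrow> 'a))) set" where
  "der_rel G1 G0 bd act = {((g, \<gamma>), (g', \<gamma>')).
      (g, \<gamma>) \<in> Der G1 G0 bd act \<and> (g', \<gamma>') \<in> Der G1 G0 bd act \<and>
      (\<exists>a\<in>carrier G1. g' = inv\<^bsub>G0\<^esub> (bd a) \<otimes>\<^bsub>G0\<^esub> g \<and>
         (\<forall>t\<in>carrier G0. \<gamma>' t = inv\<^bsub>G1\<^esub> a \<otimes>\<^bsub>G1\<^esub> \<gamma> t \<otimes>\<^bsub>G1\<^esub> act t a))}"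

definition H1 ::
  "('a, 'c) monoid_scheme \<Rightarrow> ('b, 'd) monoid_scheme \<Rightarrow> ('a \<Rightarrow> 'b) \<Rightarrow> ('b \<Rightarrow> 'a \<Rightarrow> 'a)
   \<Rightarrow> ('b \<times> ('b \<Rightarrow> 'a)) set set" where
  "H1 G1 G0 bd act = Der G1 G0 bd act // der_rel G1 G0 bd act"

definition Z0 ::
  "('a, 'c) monoid_scheme \<Rightarrow> ('b, 'd) monoid_scheme \<Rightarrow> ('a \<Rightarrow> 'b) \<Rightarrow> ('b \<Rightarrow> 'a \<Rightarrow> 'a)
   \<Rightarrow> ('b \<times> ('b \<Rightarrow> 'a)) set" where
  "Z0 G1 G0 bd act = {(x, \<xi>) \<in> Der G1 G0 bd act.
      \<forall>a\<in>carrier G1. \<xi> (bd a) = act x a \<otimes>\<^bsub>G1\<^esub> inv\<^bsub>G1\<^esub> a}"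

definition Z0Grp ::
  "('a, 'c) monoid_scheme \<Rightarrow> ('b, 'd) monoid_scheme \<Rightarrow> ('a \<Rightarrow> 'b) \<Rightarrow> ('b \<Rightarrow> 'a \<Rightarrow> 'a)
   \<Rightarrow> ('b \<times> ('b \<Rightarrow> 'a)) monoid" where
  "Z0Grp G1 G0 bd act = (DerGrp G1 G0 bd act)\<lparr>carrier := Z0 G1 G0 bd act\<rparr>"

definition delta ::
  "('a, 'c) monoid_scheme \<Rightarrow> ('b, 'd) monoid_scheme \<Rightarrow> ('a \<Rightarrow> 'b) \<Rightarrow> ('b \<Rightarrow> 'a \<Rightarrow> 'a)
   \<Rightarrow> 'a \<Rightarrow> 'b \<times> ('b \<Rightarrow> 'a)" where
  "delta G1 G0 bd act c = (bd c, \<lambda>t\<in>carrier G0. c \<otimes>\<^bsub>G1\<^esub> inv\<^bsub>G1\<^esub> (act t c))"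

definition pi1 ::
  "('a, 'c) monoid_scheme \<Rightarrow> ('b, 'd) monoid_scheme \<Rightarrow> ('a \<Rightarrow> 'b) \<Rightarrow> ('b \<Rightarrow> 'a \<Rightarrow> 'a) \<Rightarrow> 'a set" where
  "pi1 G1 G0 bd act = kernel G1 (DerGrp G1 G0 bd act) (delta G1 G0 bd act)"

definition pi0 ::
  "('a, 'c) monoid_scheme \<Rightarrow> ('b, 'd) monoid_scheme \<Rightarrow> ('a \<Rightarrow> 'b) \<Rightarrow> ('b \<Rightarrow> 'a \<Rightarrow> 'a)
   \<Rightarrow> ('b \<times> ('b \<Rightarrow> 'a)) set set" where
  "pi0 G1 G0 bd act = rcosets\<^bsub>Z0Grp G1 G0 bd act\<^esub> (delta G1 G0 bd act ` carrier G1)"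

end

theory Submission
  imports Defs
begin

context group begin
lemma cancel_l [simp]: "x \<in> carrier G \<Longrightarrow> y \<in> carrier G \<Longrightarrow> inv x \<otimes> (x \<otimes> y) = y"
  by (simp add: m_assoc[symmetric])
lemma cancel_r [simp]: "x \<in> carrier G \<Longrightarrow> y \<in> carrier G \<Longrightarrow> x \<otimes> (inv x \<otimes> y) = y"
  by (simp add: m_assoc[symmetric])
end

locale xmod = G1: group G1 + G0: group G0
  for G1 :: "('a, 'c) monoid_scheme" and G0 :: "('b, 'd) monoid_scheme" +
  fixes bd :: "'a \<Rightarrow> 'b" and act :: "'b \<Rightarrow> 'a \<Rightarrow> 'a"
  assumes bd_hom: "bd \<in> hom G1 G0"
  and act_iso: "x \<in> carrier G0 \<Longrightarrow> act x \<in> iso G1 G1"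
  and act_one [simp]: "a \<in> carrier G1 \<Longrightarrow> act \<one>\<^bsub>G0\<^esub> a = a"
  and act_act: "x \<in> carrier G0 \<Longrightarrow> y \<in> carrier G0 \<Longrightarrow> a \<in> carrier G1 \<Longrightarrow>
        act (x \<otimes>\<^bsub>G0\<^esub> y) a = act x (act y a)"
  and bd_act [simp]: "x \<in> carrier G0 \<Longrightarrow> a \<in> carrier G1 \<Longrightarrow>
        bd (act x a) = x \<otimes>\<^bsub>G0\<^esub> bd a \<otimes>\<^bsub>G0\<^esub> inv\<^bsub>G0\<^esub> x"
  and act_bd: "a \<in> carrier G1 \<Longrightarrow> b \<in> carrier G1 \<Longrightarrow>
        act (bd b) a = b \<otimes>\<^bsub>G1\<^esub> a \<otimes>\<^bsub>G1\<^esub> inv\<^bsub>G1\<^esub> b"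

lemma xmodI: "crossed_module G1 G0 bd act \<Longrightarrow> xmod G1 G0 bd act"
  unfolding crossed_module_def xmod_def xmod_axioms_def by blast

context xmod begin

lemma bd_closed [simp]: "a \<in> carrier G1 \<Longrightarrow> bd a \<in> carrier G0"
  using bd_hom by (auto simp: hom_def)
lemma bd_mult [simp]: "a \<in> carrier G1 \<Longrightarrow> b \<in> carrier G1 \<Longrightarrow> bd (a \<otimes>\<^bsub>G1\<^esub> b) = bd a \<otimes>\<^bsub>G0\<^esub> bd b"
  using bd_hom by (auto simp: hom_def)
lemma bd_gh: "group_hom G1 G0 bd"
  by (simp add: G0.group_axioms G1.group_axioms bd_hom group_hom.intro group_hom_axioms.intro)
lemma bd_inv [simp]: "a \<in> carrier G1 \<Longrightarrow> bd (inv\<^bsub>G1\<^esub> a) = inv\<^bsub>G0\<^esub> bd a"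
  using group_hom.hom_inv[OF bd_gh] by blast
lemma bd_one [simp]: "bd \<one>\<^bsub>G1\<^esub> = \<one>\<^bsub>G0\<^esub>"
  using group_hom.hom_one[OF bd_gh] by blast

lemma act_gh: "x \<in> carrier G0 \<Longrightarrow> group_hom G1 G1 (act x)"
  using act_iso by (simp add: G1.group_axioms group_hom.intro group_hom_axioms.intro iso_def)
lemma act_closed [simp]: "x \<in> carrier G0 \<Longrightarrow> a \<in> carrier G1 \<Longrightarrow> act x a \<in> carrier G1"
  using act_iso by (auto simp: iso_def hom_def)
lemma act_mult [simp]: "x \<in> carrier G0 \<Longrightarrow> a \<in> carrier G1 \<Longrightarrow> b \<in> carrier G1 \<Longrightarrow>
   act x (a \<otimes>\<^bsub>G1\<^esub> b) = act x a \<otimes>\<^bsub>G1\<^esub> act x b"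
  using act_iso by (auto simp: iso_def hom_def)
lemma act_inv [simp]: "x \<in> carrier G0 \<Longrightarrow> a \<in> carrier G1 \<Longrightarrow> act x (inv\<^bsub>G1\<^esub> a) = inv\<^bsub>G1\<^esub> act x a"
  using group_hom.hom_inv[OF act_gh] by blast
lemma act_one1 [simp]: "x \<in> carrier G0 \<Longrightarrow> act x \<one>\<^bsub>G1\<^esub> = \<one>\<^bsub>G1\<^esub>"
  using group_hom.hom_one[OF act_gh] by blast

lemma DerE:
  assumes "(g, \<gamma>) \<in> Der G1 G0 bd act"
  shows "g \<in> carrier G0" "\<And>t. t \<in> carrier G0 \<Longrightarrow> \<gamma> t \<in> carrier G1"
    "\<gamma> \<in> extensional (carrier G0)"
    "\<And>s t. s \<in> carrier G0 \<Longrightarrow> t \<in> carrier G0 \<Longrightarrow> \<gamma> (s \<otimes>\<^bsub>G0\<^esub> t) = \<gamma> s \<otimes>\<^bsub>G1\<^esub> act s (\<gamma> t)"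
    "\<And>t. t \<in> carrier G0 \<Longrightarrow> bd (\<gamma> t) = commutator G0 g t"
  using assms unfolding Der_def by (auto simp: PiE_iff)

lemma conj_der:
  assumes "(g, \<gamma>) \<in> Der G1 G0 bd act" "s \<in> carrier G0" "y \<in> carrier G1"
  shows "act (g \<otimes>\<^bsub>G0\<^esub> s) y \<otimes>\<^bsub>G1\<^esub> \<gamma> s = \<gamma> s \<otimes>\<^bsub>G1\<^esub> act (s \<otimes>\<^bsub>G0\<^esub> g) y"
proof -
  note D = DerE[OF assms(1)]
  have c: "commutator G0 g s \<otimes>\<^bsub>G0\<^esub> (s \<otimes>\<^bsub>G0\<^esub> g) = g \<otimes>\<^bsub>G0\<^esub> s"
    using D(1) assms by (simp add: commutator_def G0.m_assoc)
  have "act (g \<otimes>\<^bsub>G0\<^esub> s) y = act (bd (\<gamma> s)) (act (s \<otimes>\<^bsub>G0\<^esub> g) y)"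
    using D assms c by (simp add: act_act[symmetric] commutator_def)
  also have "\<dots> = \<gamma> s \<otimes>\<^bsub>G1\<^esub> act (s \<otimes>\<^bsub>G0\<^esub> g) y \<otimes>\<^bsub>G1\<^esub> inv\<^bsub>G1\<^esub> \<gamma> s"
    using D assms by (intro act_bd) auto
  finally show ?thesis using D assms by (simp add: G1.m_assoc)
qed

lemma der_mult:
  assumes "(g, \<gamma>) \<in> Der G1 G0 bd act" "(g', \<gamma>') \<in> Der G1 G0 bd act"
  shows "(g \<otimes>\<^bsub>G0\<^esub> g', \<lambda>t\<in>carrier G0. act g (\<gamma>' t) \<otimes>\<^bsub>G1\<^esub> \<gamma> t) \<in> Der G1 G0 bd act"
proof -
  note D = DerE[OF assms(1)] and D' = DerE[OF assms(2)]
  have coc: "act g (\<gamma>' (s \<otimes>\<^bsub>G0\<^esub> t)) \<otimes>\<^bsub>G1\<^esub> \<gamma> (s \<otimes>\<^bsub>G0\<^esub> t) =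
     (act g (\<gamma>' s) \<otimes>\<^bsub>G1\<^esub> \<gamma> s) \<otimes>\<^bsub>G1\<^esub> act s (act g (\<gamma>' t) \<otimes>\<^bsub>G1\<^esub> \<gamma> t)"
    if st: "s \<in> carrier G0" "t \<in> carrier G0" for s t
  proof -
    have k: "act (g \<otimes>\<^bsub>G0\<^esub> s) (\<gamma>' t) \<otimes>\<^bsub>G1\<^esub> \<gamma> s = \<gamma> s \<otimes>\<^bsub>G1\<^esub> act (s \<otimes>\<^bsub>G0\<^esub> g) (\<gamma>' t)"
      using conj_der[OF assms(1)] st D' by simp
    have "act g (\<gamma>' (s \<otimes>\<^bsub>G0\<^esub> t)) \<otimes>\<^bsub>G1\<^esub> \<gamma> (s \<otimes>\<^bsub>G0\<^esub> t)
        = act g (\<gamma>' s) \<otimes>\<^bsub>G1\<^esub> (act (g \<otimes>\<^bsub>G0\<^esub> s) (\<gamma>' t) \<otimes>\<^bsub>G1\<^esub> \<gamma> s) \<otimes>\<^bsub>G1\<^esub> act s (\<gamma> t)"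
      using st D D' by (simp add: act_act G1.m_assoc)
    also have "\<dots> = act g (\<gamma>' s) \<otimes>\<^bsub>G1\<^esub> (\<gamma> s \<otimes>\<^bsub>G1\<^esub> act (s \<otimes>\<^bsub>G0\<^esub> g) (\<gamma>' t)) \<otimes>\<^bsub>G1\<^esub> act s (\<gamma> t)"
      by (simp only: k)
    also have "\<dots> = (act g (\<gamma>' s) \<otimes>\<^bsub>G1\<^esub> \<gamma> s) \<otimes>\<^bsub>G1\<^esub> act s (act g (\<gamma>' t) \<otimes>\<^bsub>G1\<^esub> \<gamma> t)"
      using st D D' by (simp add: act_act G1.m_assoc)
    finally show ?thesis .
  qed
  have bdc: "bd (act g (\<gamma>' t) \<otimes>\<^bsub>G1\<^esub> \<gamma> t) = commutator G0 (g \<otimes>\<^bsub>G0\<^esub> g') t"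
    if t: "t \<in> carrier G0" for t
    using t D D' by (simp add: commutator_def G0.m_assoc G0.inv_mult_group)
  show ?thesis unfolding Der_def using D D' coc bdc by auto
qed


abbreviation "DD \<equiv> DerGrp G1 G0 bd act"

lemma D_carrier [simp]: "carrier DD = Der G1 G0 bd act"
  by (simp add: DerGrp_def)
lemma D_mult [simp]: "(g, \<gamma>) \<otimes>\<^bsub>DD\<^esub> (g', \<gamma>') = (g \<otimes>\<^bsub>G0\<^esub> g', \<lambda>t\<in>carrier G0. act g (\<gamma>' t) \<otimes>\<^bsub>G1\<^esub> \<gamma> t)"
  by (simp add: DerGrp_def)
lemma D_one: "\<one>\<^bsub>DD\<^esub> = (\<one>\<^bsub>G0\<^esub>, \<lambda>t\<in>carrier G0. \<one>\<^bsub>G1\<^esub>)"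
  by (simp add: DerGrp_def)

definition "dinv = (\<lambda>(g, \<gamma>). (inv\<^bsub>G0\<^esub> g, \<lambda>t\<in>carrier G0. act (inv\<^bsub>G0\<^esub> g) (inv\<^bsub>G1\<^esub> (\<gamma> t))))"

lemma one_der: "(\<one>\<^bsub>G0\<^esub>, \<lambda>t\<in>carrier G0. \<one>\<^bsub>G1\<^esub>) \<in> Der G1 G0 bd act"
  unfolding Der_def by (auto simp: commutator_def)

lemma dinv_der:
  assumes "(g, \<gamma>) \<in> Der G1 G0 bd act"
  shows "dinv (g, \<gamma>) \<in> Der G1 G0 bd act"
proof -
  note D = DerE[OF assms(1)]
  let ?ig = "inv\<^bsub>G0\<^esub> g"
  have coc: "act ?ig (inv\<^bsub>G1\<^esub> (\<gamma> (s \<otimes>\<^bsub>G0\<^esub> t))) =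
     act ?ig (inv\<^bsub>G1\<^esub> (\<gamma> s)) \<otimes>\<^bsub>G1\<^esub> act s (act ?ig (inv\<^bsub>G1\<^esub> (\<gamma> t)))"
    if st: "s \<in> carrier G0" "t \<in> carrier G0" for s t
  proof -
    define w where "w = act ?ig (inv\<^bsub>G1\<^esub> (\<gamma> t))"
    have w: "w \<in> carrier G1" using st D by (simp add: w_def)
    have k: "act (g \<otimes>\<^bsub>G0\<^esub> s) w \<otimes>\<^bsub>G1\<^esub> \<gamma> s = \<gamma> s \<otimes>\<^bsub>G1\<^esub> act (s \<otimes>\<^bsub>G0\<^esub> g) w"
      using conj_der[OF assms(1) st(1) w] .
    have k2: "act g (act s (act ?ig (inv\<^bsub>G1\<^esub> (\<gamma> t)))) \<otimes>\<^bsub>G1\<^esub> \<gamma> s = \<gamma> s \<otimes>\<^bsub>G1\<^esub> act s (inv\<^bsub>G1\<^esub> (\<gamma> t))"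
    proof -
      have "act g (act s (act ?ig (inv\<^bsub>G1\<^esub> (\<gamma> t)))) = act (g \<otimes>\<^bsub>G0\<^esub> s) w"
        using st D by (simp add: w_def act_act)
      moreover have "act s (inv\<^bsub>G1\<^esub> (\<gamma> t)) = act (s \<otimes>\<^bsub>G0\<^esub> g) w"
      proof -
        have "act (s \<otimes>\<^bsub>G0\<^esub> g) w = act s (act (g \<otimes>\<^bsub>G0\<^esub> ?ig) (inv\<^bsub>G1\<^esub> (\<gamma> t)))"
          unfolding w_def using st D by (simp only: act_act G0.inv_closed G1.inv_closed act_closed)
        then show ?thesis using st D by simp
      qed
      ultimately show ?thesis using k by simp
    qed
    have "act g (act ?ig (inv\<^bsub>G1\<^esub> (\<gamma> (s \<otimes>\<^bsub>G0\<^esub> t)))) =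
       act g (act ?ig (inv\<^bsub>G1\<^esub> (\<gamma> s)) \<otimes>\<^bsub>G1\<^esub> act s (act ?ig (inv\<^bsub>G1\<^esub> (\<gamma> t))))"
    proof -
      have l: "act g (act ?ig (inv\<^bsub>G1\<^esub> (\<gamma> (s \<otimes>\<^bsub>G0\<^esub> t)))) = act s (inv\<^bsub>G1\<^esub> (\<gamma> t)) \<otimes>\<^bsub>G1\<^esub> inv\<^bsub>G1\<^esub> (\<gamma> s)"
        using st D by (simp add: act_act[symmetric] G1.inv_mult_group)
      have r: "act g (act ?ig (inv\<^bsub>G1\<^esub> (\<gamma> s)) \<otimes>\<^bsub>G1\<^esub> act s (act ?ig (inv\<^bsub>G1\<^esub> (\<gamma> t))))
          = inv\<^bsub>G1\<^esub> (\<gamma> s) \<otimes>\<^bsub>G1\<^esub> act g (act s (act ?ig (inv\<^bsub>G1\<^esub> (\<gamma> t))))"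
        using st D by (simp add: act_act[symmetric])
      have "act g (act s (act ?ig (inv\<^bsub>G1\<^esub> (\<gamma> t)))) = \<gamma> s \<otimes>\<^bsub>G1\<^esub> act s (inv\<^bsub>G1\<^esub> (\<gamma> t)) \<otimes>\<^bsub>G1\<^esub> inv\<^bsub>G1\<^esub> (\<gamma> s)"
      proof -
        have cl: "act g (act s (act ?ig (inv\<^bsub>G1\<^esub> (\<gamma> t)))) \<in> carrier G1"
          "\<gamma> s \<otimes>\<^bsub>G1\<^esub> act s (inv\<^bsub>G1\<^esub> (\<gamma> t)) \<in> carrier G1" "\<gamma> s \<in> carrier G1"
          using st D by auto
        show ?thesis using G1.inv_solve_right[OF cl] k2 by metis
      qed
      then show ?thesis using l r st D by (simp add: G1.m_assoc)
    qed
    then show ?thesis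
      using st D act_iso[of g] by (simp add: iso_def bij_betw_def inj_on_def)
  qed
  have bdc: "bd (act ?ig (inv\<^bsub>G1\<^esub> (\<gamma> t))) = commutator G0 ?ig t"
    if t: "t \<in> carrier G0" for t
    using t D by (simp add: commutator_def G0.m_assoc G0.inv_mult_group)
  show ?thesis unfolding Der_def dinv_def using D coc bdc by auto
qed

lemma dinv_l: "x \<in> Der G1 G0 bd act \<Longrightarrow> dinv x \<otimes>\<^bsub>DD\<^esub> x = \<one>\<^bsub>DD\<^esub>"
proof -
  assume x: "x \<in> Der G1 G0 bd act"
  obtain g \<gamma> where e: "x = (g, \<gamma>)" by (cases x)
  note D = DerE[OF x[unfolded e]]
  show ?thesis unfolding e dinv_def D_one using D
    by (auto intro!: restrict_ext simp del: act_mult simp add: act_mult[symmetric])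
qed

lemma restrict_eqI: "\<gamma> \<in> extensional A \<Longrightarrow> (\<And>t. t \<in> A \<Longrightarrow> f t = \<gamma> t) \<Longrightarrow> restrict f A = \<gamma>"
  by (metis extensional_restrict restrict_ext)

lemma D_group: "group DD"
proof (rule groupI)
  fix x y assume "x \<in> carrier DD" "y \<in> carrier DD"
  then show "x \<otimes>\<^bsub>DD\<^esub> y \<in> carrier DD"
    by (cases x, cases y) (simp add: der_mult)
next
  show "\<one>\<^bsub>DD\<^esub> \<in> carrier DD" by (simp add: D_one one_der)
next
  fix x y z assume xyz: "x \<in> carrier DD" "y \<in> carrier DD" "z \<in> carrier DD"
  obtain g \<gamma> g' \<gamma>' g'' \<gamma>'' where e: "x = (g, \<gamma>)" "y = (g', \<gamma>')" "z = (g'', \<gamma>'')"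
    by (cases x, cases y, cases z) auto
  note D = DerE[of g \<gamma>] DerE[of g' \<gamma>'] DerE[of g'' \<gamma>'']
  show "x \<otimes>\<^bsub>DD\<^esub> y \<otimes>\<^bsub>DD\<^esub> z = x \<otimes>\<^bsub>DD\<^esub> (y \<otimes>\<^bsub>DD\<^esub> z)"
    using xyz D unfolding e
    by (auto simp: G0.m_assoc G1.m_assoc act_act intro!: restrict_ext)
next
  fix x assume x: "x \<in> carrier DD"
  obtain g \<gamma> where e: "x = (g, \<gamma>)" by (cases x)
  note D = DerE[of g \<gamma>]
  show "\<one>\<^bsub>DD\<^esub> \<otimes>\<^bsub>DD\<^esub> x = x"
    using x D unfolding e D_one
    by (auto intro!: restrict_eqI)
next
  fix x assume x: "x \<in> carrier DD"
  then show "\<exists>y\<in>carrier DD. y \<otimes>\<^bsub>DD\<^esub> x = \<one>\<^bsub>DD\<^esub>"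
    using dinv_l dinv_der by (intro bexI[of _ "dinv x"]) (cases x, auto)+
qed

lemma D_inv: "x \<in> carrier DD \<Longrightarrow> inv\<^bsub>DD\<^esub> x = dinv x"
  using group.inv_equality[OF D_group] dinv_l dinv_der by (cases x) auto


lemma Z0_iff: "(g, \<xi>) \<in> Z0 G1 G0 bd act \<longleftrightarrow> (g, \<xi>) \<in> Der G1 G0 bd act \<and>
   (\<forall>a\<in>carrier G1. \<xi> (bd a) = act g a \<otimes>\<^bsub>G1\<^esub> inv\<^bsub>G1\<^esub> a)"
  by (simp add: Z0_def)

lemma Z0_sub: "Z0 G1 G0 bd act \<subseteq> Der G1 G0 bd act"
  by (auto simp: Z0_def)

lemma Z0_subgroup: "subgroup (Z0 G1 G0 bd act) DD"
proof (rule group.subgroupI[OF D_group])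
  show "Z0 G1 G0 bd act \<subseteq> carrier DD" using Z0_sub by simp
  show "Z0 G1 G0 bd act \<noteq> {}"
  proof -
    have "(\<one>\<^bsub>G0\<^esub>, \<lambda>t\<in>carrier G0. \<one>\<^bsub>G1\<^esub>) \<in> Z0 G1 G0 bd act"
      using one_der by (auto simp: Z0_iff)
    then show ?thesis by blast
  qed
next
  fix x assume x: "x \<in> Z0 G1 G0 bd act"
  obtain g \<xi> where e: "x = (g, \<xi>)" by (cases x)
  have xd: "(g, \<xi>) \<in> Der G1 G0 bd act" and xa: "\<And>a. a \<in> carrier G1 \<Longrightarrow> \<xi> (bd a) = act g a \<otimes>\<^bsub>G1\<^esub> inv\<^bsub>G1\<^esub> a"
    using x e by (auto simp: Z0_iff)
  note D = DerE[OF xd]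
  have "inv\<^bsub>DD\<^esub> x = dinv x" using x Z0_sub D_inv[of x] by auto
  moreover have "dinv (g, \<xi>) \<in> Z0 G1 G0 bd act"
  proof -
    have "act (inv\<^bsub>G0\<^esub> g) (inv\<^bsub>G1\<^esub> (\<xi> (bd a))) = act (inv\<^bsub>G0\<^esub> g) a \<otimes>\<^bsub>G1\<^esub> inv\<^bsub>G1\<^esub> a"
      if a: "a \<in> carrier G1" for a
      using a D xa[OF a] by (simp add: G1.inv_mult_group act_act[symmetric])
    then show ?thesis using dinv_der[OF xd] by (auto simp: Z0_iff dinv_def)
  qed
  ultimately show "inv\<^bsub>DD\<^esub> x \<in> Z0 G1 G0 bd act" using e by simp
next
  fix x y assume x: "x \<in> Z0 G1 G0 bd act" and y: "y \<in> Z0 G1 G0 bd act"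
  obtain g \<xi> g' \<xi>' where e: "x = (g, \<xi>)" "y = (g', \<xi>')" by (cases x, cases y)
  have xd: "(g, \<xi>) \<in> Der G1 G0 bd act" and xa: "\<And>a. a \<in> carrier G1 \<Longrightarrow> \<xi> (bd a) = act g a \<otimes>\<^bsub>G1\<^esub> inv\<^bsub>G1\<^esub> a"
    using x e by (auto simp: Z0_iff)
  have yd: "(g', \<xi>') \<in> Der G1 G0 bd act" and ya: "\<And>a. a \<in> carrier G1 \<Longrightarrow> \<xi>' (bd a) = act g' a \<otimes>\<^bsub>G1\<^esub> inv\<^bsub>G1\<^esub> a"
    using y e by (auto simp: Z0_iff)
  note D = DerE[OF xd] DerE[OF yd]
  have "act g (\<xi>' (bd a)) \<otimes>\<^bsub>G1\<^esub> \<xi> (bd a) = act (g \<otimes>\<^bsub>G0\<^esub> g') a \<otimes>\<^bsub>G1\<^esub> inv\<^bsub>G1\<^esub> a"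
    if a: "a \<in> carrier G1" for a
    using a D xa[OF a] ya[OF a] by (simp add: G1.m_assoc act_act)
  then show "x \<otimes>\<^bsub>DD\<^esub> y \<in> Z0 G1 G0 bd act"
    using der_mult[OF xd yd] e D by (auto simp: Z0_iff)
qed

abbreviation "dl \<equiv> delta G1 G0 bd act"

lemma delta_der: "c \<in> carrier G1 \<Longrightarrow> dl c \<in> Der G1 G0 bd act"
  unfolding delta_def Der_def
  by (auto simp: act_act G1.m_assoc G1.inv_mult_group commutator_def G0.inv_mult_group G0.m_assoc)

lemma delta_Z0: "c \<in> carrier G1 \<Longrightarrow> dl c \<in> Z0 G1 G0 bd act"
  unfolding delta_def using delta_der[unfolded delta_def]
  by (auto simp: Z0_iff act_bd G1.inv_mult_group G1.m_assoc)

lemma delta_mult_left: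
  assumes "(g, \<gamma>) \<in> Der G1 G0 bd act" "c \<in> carrier G1"
  shows "dl c \<otimes>\<^bsub>DD\<^esub> (g, \<gamma>) = (bd c \<otimes>\<^bsub>G0\<^esub> g, \<lambda>t\<in>carrier G0. c \<otimes>\<^bsub>G1\<^esub> \<gamma> t \<otimes>\<^bsub>G1\<^esub> inv\<^bsub>G1\<^esub> (act t c))"
  using assms DerE[OF assms(1)]
  by (auto simp: delta_def act_bd G1.m_assoc intro!: restrict_ext)

lemma delta_hom: "dl \<in> hom G1 DD"
proof -
  have "dl (c \<otimes>\<^bsub>G1\<^esub> c') = dl c \<otimes>\<^bsub>DD\<^esub> dl c'" if "c \<in> carrier G1" "c' \<in> carrier G1" for c c'
  proof -
    have "dl c' \<in> Der G1 G0 bd act" using that delta_der by auto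
    moreover obtain g \<gamma> where "dl c' = (g, \<gamma>)" by (cases "dl c'")
    ultimately show ?thesis using that delta_mult_left[of g \<gamma> c]
      by (auto simp: delta_def G1.m_assoc G1.inv_mult_group intro!: restrict_ext)
  qed
  then show ?thesis using delta_der by (auto simp: hom_def)
qed

lemma delta_one_iff: "c \<in> carrier G1 \<Longrightarrow> dl c = \<one>\<^bsub>DD\<^esub> \<longleftrightarrow> c \<in> H0 G1 G0 bd act"
proof -
  assume c: "c \<in> carrier G1"
  have "(\<lambda>t\<in>carrier G0. c \<otimes>\<^bsub>G1\<^esub> inv\<^bsub>G1\<^esub> act t c) = (\<lambda>t\<in>carrier G0. \<one>\<^bsub>G1\<^esub>)
       \<longleftrightarrow> (\<forall>t\<in>carrier G0. act t c = c)"
  proof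
    assume h: "(\<lambda>t\<in>carrier G0. c \<otimes>\<^bsub>G1\<^esub> inv\<^bsub>G1\<^esub> act t c) = (\<lambda>t\<in>carrier G0. \<one>\<^bsub>G1\<^esub>)"
    show "\<forall>t\<in>carrier G0. act t c = c"
    proof
      fix t assume t: "t \<in> carrier G0"
      have "c \<otimes>\<^bsub>G1\<^esub> inv\<^bsub>G1\<^esub> act t c = \<one>\<^bsub>G1\<^esub>" using fun_cong[OF h, of t] t by simp
      then show "act t c = c" using c t G1.inv_solve_right'[of "\<one>\<^bsub>G1\<^esub>" c "act t c"] by simp
    qed
  qed (auto intro!: restrict_ext simp: c)
  then show ?thesis using c by (auto simp: delta_def D_one H0_def)
qed

abbreviation "RR \<equiv> der_rel G1 G0 bd act"

lemma R_iff:
  assumes z: "z \<in> Der G1 G0 bd act" and z': "z' \<in> Der G1 G0 bd act"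
  shows "(z, z') \<in> RR \<longleftrightarrow> (\<exists>c\<in>carrier G1. z' = dl c \<otimes>\<^bsub>DD\<^esub> z)"
proof -
  obtain g \<gamma> g' \<gamma>' where e: "z = (g, \<gamma>)" "z' = (g', \<gamma>')" by (cases z, cases z')
  note D = DerE[OF z[unfolded e]] and D' = DerE[OF z'[unfolded e]]
  have "(\<exists>a\<in>carrier G1. g' = inv\<^bsub>G0\<^esub> (bd a) \<otimes>\<^bsub>G0\<^esub> g \<and>
         (\<forall>t\<in>carrier G0. \<gamma>' t = inv\<^bsub>G1\<^esub> a \<otimes>\<^bsub>G1\<^esub> \<gamma> t \<otimes>\<^bsub>G1\<^esub> act t a))
      \<longleftrightarrow> (\<exists>c\<in>carrier G1. (g', \<gamma>') = (bd c \<otimes>\<^bsub>G0\<^esub> g, \<lambda>t\<in>carrier G0. c \<otimes>\<^bsub>G1\<^esub> \<gamma> t \<otimes>\<^bsub>G1\<^esub> inv\<^bsub>G1\<^esub> (act t c)))"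
  proof
    assume "\<exists>a\<in>carrier G1. g' = inv\<^bsub>G0\<^esub> (bd a) \<otimes>\<^bsub>G0\<^esub> g \<and>
         (\<forall>t\<in>carrier G0. \<gamma>' t = inv\<^bsub>G1\<^esub> a \<otimes>\<^bsub>G1\<^esub> \<gamma> t \<otimes>\<^bsub>G1\<^esub> act t a)"
    then obtain a where a: "a \<in> carrier G1" "g' = inv\<^bsub>G0\<^esub> (bd a) \<otimes>\<^bsub>G0\<^esub> g"
      "\<And>t. t \<in> carrier G0 \<Longrightarrow> \<gamma>' t = inv\<^bsub>G1\<^esub> a \<otimes>\<^bsub>G1\<^esub> \<gamma> t \<otimes>\<^bsub>G1\<^esub> act t a" by blast
    show "\<exists>c\<in>carrier G1. (g', \<gamma>') = (bd c \<otimes>\<^bsub>G0\<^esub> g, \<lambda>t\<in>carrier G0. c \<otimes>\<^bsub>G1\<^esub> \<gamma> t \<otimes>\<^bsub>G1\<^esub> inv\<^bsub>G1\<^esub> (act t c))"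
      using a D D' by (intro bexI[of _ "inv\<^bsub>G1\<^esub> a"]) (auto intro!: restrict_eqI[symmetric])
  next
    assume "\<exists>c\<in>carrier G1. (g', \<gamma>') = (bd c \<otimes>\<^bsub>G0\<^esub> g, \<lambda>t\<in>carrier G0. c \<otimes>\<^bsub>G1\<^esub> \<gamma> t \<otimes>\<^bsub>G1\<^esub> inv\<^bsub>G1\<^esub> (act t c))"
    then obtain c where c: "c \<in> carrier G1" "g' = bd c \<otimes>\<^bsub>G0\<^esub> g"
      "\<gamma>' = (\<lambda>t\<in>carrier G0. c \<otimes>\<^bsub>G1\<^esub> \<gamma> t \<otimes>\<^bsub>G1\<^esub> inv\<^bsub>G1\<^esub> (act t c))" by blast
    show "\<exists>a\<in>carrier G1. g' = inv\<^bsub>G0\<^esub> (bd a) \<otimes>\<^bsub>G0\<^esub> g \<and>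
         (\<forall>t\<in>carrier G0. \<gamma>' t = inv\<^bsub>G1\<^esub> a \<otimes>\<^bsub>G1\<^esub> \<gamma> t \<otimes>\<^bsub>G1\<^esub> act t a)"
      using c D by (intro bexI[of _ "inv\<^bsub>G1\<^esub> c"]) auto
  qed
  then show ?thesis using z z' unfolding e der_rel_def
    by (simp add: delta_mult_left[OF z[unfolded e]])
qed

lemma R_sub: "RR \<subseteq> Der G1 G0 bd act \<times> Der G1 G0 bd act"
  by (auto simp: der_rel_def)

lemma R_equiv: "equiv (carrier DD) RR"
proof (rule equivI)
  interpret D: group DD by (rule D_group)
  show "RR \<subseteq> carrier DD \<times> carrier DD" using R_sub by simp
  show "refl_on (carrier DD) RR"
  proof (rule refl_onI)
    fix x assume x: "x \<in> carrier DD"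
    have "dl \<one>\<^bsub>G1\<^esub> = \<one>\<^bsub>DD\<^esub>" using delta_one_iff by (simp add: H0_def)
    then show "(x, x) \<in> RR" using R_iff[of x x] x by (auto intro!: bexI[of _ "\<one>\<^bsub>G1\<^esub>"])
  qed
  show "sym RR"
  proof (rule symI)
    fix x y assume xy: "(x, y) \<in> RR"
    then have x: "x \<in> carrier DD" and y: "y \<in> carrier DD" using R_sub by auto
    obtain c where c: "c \<in> carrier G1" "y = dl c \<otimes>\<^bsub>DD\<^esub> x" using R_iff x y xy by auto
    have dc: "dl c \<in> carrier DD" "dl (inv\<^bsub>G1\<^esub> c) \<in> carrier DD" using c delta_der by auto
    have "dl (inv\<^bsub>G1\<^esub> c) \<otimes>\<^bsub>DD\<^esub> y = x"
      using group_hom.hom_inv[of G1 DD dl c] delta_hom D_group c x dc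
      by (simp add: c(2) D.m_assoc[symmetric] group_hom_def group_hom_axioms_def G1.group_axioms)
    then show "(y, x) \<in> RR" using R_iff x y c by (auto intro!: bexI[of _ "inv\<^bsub>G1\<^esub> c"])
  qed
  show "trans RR"
  proof (rule transI)
    fix x y z assume xy: "(x, y) \<in> RR" and yz: "(y, z) \<in> RR"
    then have x: "x \<in> carrier DD" and y: "y \<in> carrier DD" and z: "z \<in> carrier DD" using R_sub by auto
    obtain c where c: "c \<in> carrier G1" "y = dl c \<otimes>\<^bsub>DD\<^esub> x" using R_iff x y xy by auto
    obtain d where d: "d \<in> carrier G1" "z = dl d \<otimes>\<^bsub>DD\<^esub> y" using R_iff z y yz by auto
    have "z = dl (d \<otimes>\<^bsub>G1\<^esub> c) \<otimes>\<^bsub>DD\<^esub> x"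
      using delta_hom c d x delta_der by (simp add: hom_def D.m_assoc)
    then show "(x, z) \<in> RR" using R_iff x z c d by (auto intro!: bexI[of _ "d \<otimes>\<^bsub>G1\<^esub> c"])
  qed
qed


abbreviation "ZZ \<equiv> Z0Grp G1 G0 bd act"
abbreviation "Imd \<equiv> dl ` carrier G1"

lemma Z_carrier [simp]: "carrier ZZ = Z0 G1 G0 bd act" by (simp add: Z0Grp_def)
lemma Z_mult [simp]: "x \<otimes>\<^bsub>ZZ\<^esub> y = x \<otimes>\<^bsub>DD\<^esub> y" by (simp add: Z0Grp_def)
lemma Z_one [simp]: "\<one>\<^bsub>ZZ\<^esub> = \<one>\<^bsub>DD\<^esub>" by (simp add: Z0Grp_def)
lemma Z_group: "group ZZ"
  using subgroup.subgroup_is_group[OF Z0_subgroup D_group] by (simp add: Z0Grp_def)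
lemma delta_hom_Z: "dl \<in> hom G1 ZZ"
  using delta_hom delta_Z0 by (auto simp: hom_def)
lemma Imd_subgroup: "subgroup Imd ZZ"
  using group_hom.img_is_subgroup[of G1 ZZ dl] delta_hom_Z Z_group G1.group_axioms
  by (simp add: group_hom_def group_hom_axioms_def)

lemma coset_R:
  assumes z: "z \<in> Z0 G1 G0 bd act"
  shows "RR `` (Imd #>\<^bsub>ZZ\<^esub> z) = RR `` {z}"
proof -
  have zd: "z \<in> carrier DD" using z Z0_sub by auto
  have "RR `` {w} = RR `` {z}" if w: "w \<in> Imd #>\<^bsub>ZZ\<^esub> z" for w
  proof -
    obtain c where c: "c \<in> carrier G1" "w = dl c \<otimes>\<^bsub>DD\<^esub> z" using w by (auto simp: r_coset_def)
    have wd: "w \<in> carrier DD" using monoid.m_closed[OF group.is_monoid[OF D_group], of "dl c" z] c zd delta_der by simp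
    have "(z, w) \<in> RR" using R_iff[of z w] zd wd c by auto
    then show ?thesis using R_equiv by (simp add: equiv_class_eq_iff)
  qed
  moreover have "z \<in> Imd #>\<^bsub>ZZ\<^esub> z"
    using group.rcos_self[OF Z_group, of z Imd] z Imd_subgroup by simp
  ultimately show ?thesis by blast
qed

lemma main:
  "group DD \<and> subgroup (Z0 G1 G0 bd act) DD
     \<and> H0 G1 G0 bd act \<subseteq> carrier G1
     \<and> dl \<in> hom G1 DD
     \<and> {c \<in> carrier G1. dl c = \<one>\<^bsub>DD\<^esub>} = H0 G1 G0 bd act
     \<and> equiv (carrier DD) RR
     \<and> {d \<in> carrier DD. RR `` {d} = RR `` {\<one>\<^bsub>DD\<^esub>}} = Imd
     \<and> (\<lambda>d. RR `` {d}) ` carrier DD = H1 G1 G0 bd act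
     \<and> pi1 G1 G0 bd act \<subseteq> carrier G1
     \<and> dl \<in> hom G1 ZZ
     \<and> {c \<in> carrier G1. dl c = \<one>\<^bsub>ZZ\<^esub>} = pi1 G1 G0 bd act
     \<and> {z \<in> carrier ZZ. Imd #>\<^bsub>ZZ\<^esub> z = Imd #>\<^bsub>ZZ\<^esub> \<one>\<^bsub>ZZ\<^esub>} = Imd
     \<and> (\<lambda>z. Imd #>\<^bsub>ZZ\<^esub> z) ` carrier ZZ = pi0 G1 G0 bd act
     \<and> (\<exists>\<phi>. \<phi> \<in> iso (G1\<lparr>carrier := pi1 G1 G0 bd act\<rparr>) (G1\<lparr>carrier := H0 G1 G0 bd act\<rparr>)
            \<and> (\<forall>c \<in> pi1 G1 G0 bd act. \<phi> c = c))
     \<and> carrier ZZ \<subseteq> carrier DD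
     \<and> (\<forall>c \<in> carrier G1. dl c \<in> carrier ZZ)
     \<and> (\<exists>\<psi>. inj_on \<psi> (pi0 G1 G0 bd act) \<and> \<psi> ` pi0 G1 G0 bd act \<subseteq> H1 G1 G0 bd act
            \<and> (\<forall>z \<in> carrier ZZ. \<psi> (Imd #>\<^bsub>ZZ\<^esub> z) = RR `` {z}))"
proof -
  interpret Z: group ZZ by (rule Z_group)
  interpret Dg: group DD by (rule D_group)
  have H0s: "H0 G1 G0 bd act \<subseteq> carrier G1" by (auto simp: H0_def)
  have ker: "{c \<in> carrier G1. dl c = \<one>\<^bsub>DD\<^esub>} = H0 G1 G0 bd act"
    using delta_one_iff H0s by auto
  have pi1: "pi1 G1 G0 bd act = H0 G1 G0 bd act"
    using ker by (simp add: pi1_def kernel_def)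
  have Imds: "Imd \<subseteq> carrier DD" using delta_der by auto
  have one_dl: "\<one>\<^bsub>DD\<^esub> = dl \<one>\<^bsub>G1\<^esub>"
    using delta_one_iff[of "\<one>\<^bsub>G1\<^esub>"] by (simp add: H0_def)
  have row1: "{d \<in> carrier DD. RR `` {d} = RR `` {\<one>\<^bsub>DD\<^esub>}} = Imd"
  proof -
    have pw: "RR `` {d} = RR `` {\<one>\<^bsub>DD\<^esub>} \<longleftrightarrow> d \<in> Imd" if d: "d \<in> carrier DD" for d
    proof -
      have "RR `` {d} = RR `` {\<one>\<^bsub>DD\<^esub>} \<longleftrightarrow> (\<one>\<^bsub>DD\<^esub>, d) \<in> RR"
        using R_equiv d Dg.one_closed by (auto simp: equiv_class_eq_iff)
      also have "\<dots> \<longleftrightarrow> (\<exists>c\<in>carrier G1. d = dl c \<otimes>\<^bsub>DD\<^esub> \<one>\<^bsub>DD\<^esub>)"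
        using R_iff[of "\<one>\<^bsub>DD\<^esub>" d] d Dg.one_closed by simp
      also have "\<dots> \<longleftrightarrow> d \<in> Imd" using delta_der by auto
      finally show ?thesis .
    qed
    show ?thesis
      by (rule equalityI; use pw Imds in blast)
  qed
  have cos1: "Imd #>\<^bsub>ZZ\<^esub> \<one>\<^bsub>ZZ\<^esub> = Imd"
    using Z.coset_join2[of "\<one>\<^bsub>ZZ\<^esub>" Imd] Imd_subgroup subgroup.one_closed[OF Imd_subgroup] Z.one_closed by simp
  have row2: "{z \<in> carrier ZZ. Imd #>\<^bsub>ZZ\<^esub> z = Imd #>\<^bsub>ZZ\<^esub> \<one>\<^bsub>ZZ\<^esub>} = Imd"
  proof -
    have pw: "Imd #>\<^bsub>ZZ\<^esub> z = Imd \<longleftrightarrow> z \<in> Imd" if z: "z \<in> carrier ZZ" for z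
      using Z.coset_join2[OF z Imd_subgroup] Z.rcos_self[OF z Imd_subgroup] by auto
    have sub: "Imd \<subseteq> carrier ZZ" using delta_Z0 by auto
    show ?thesis unfolding cos1 by (rule equalityI; use pw sub in blast)
  qed
  have iso: "(\<lambda>c. c) \<in> iso (G1\<lparr>carrier := pi1 G1 G0 bd act\<rparr>) (G1\<lparr>carrier := H0 G1 G0 bd act\<rparr>)"
    unfolding pi1 by (simp add: iso_def hom_def bij_betw_def)
  have psi: "inj_on (\<lambda>C. RR `` C) (pi0 G1 G0 bd act) \<and> (\<lambda>C. RR `` C) ` pi0 G1 G0 bd act \<subseteq> H1 G1 G0 bd act
            \<and> (\<forall>z \<in> carrier ZZ. RR `` (Imd #>\<^bsub>ZZ\<^esub> z) = RR `` {z})"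
  proof (intro conjI)
    show "\<forall>z \<in> carrier ZZ. RR `` (Imd #>\<^bsub>ZZ\<^esub> z) = RR `` {z}" using coset_R by simp
    show "(\<lambda>C. RR `` C) ` pi0 G1 G0 bd act \<subseteq> H1 G1 G0 bd act"
      using coset_R Z0_sub by (auto simp: pi0_def RCOSETS_def H1_def intro!: quotientI)
    show "inj_on (\<lambda>C. RR `` C) (pi0 G1 G0 bd act)"
    proof (rule inj_onI)
      fix C C' assume C: "C \<in> pi0 G1 G0 bd act" and C': "C' \<in> pi0 G1 G0 bd act" and eq: "RR `` C = RR `` C'"
      obtain z where z: "z \<in> Z0 G1 G0 bd act" "C = Imd #>\<^bsub>ZZ\<^esub> z" using C by (auto simp: pi0_def RCOSETS_def)
      obtain z' where z': "z' \<in> Z0 G1 G0 bd act" "C' = Imd #>\<^bsub>ZZ\<^esub> z'" using C' by (auto simp: pi0_def RCOSETS_def)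
      have zd: "z \<in> carrier DD" "z' \<in> carrier DD" using z z' Z0_sub by auto
      have "RR `` {z} = RR `` {z'}" using eq coset_R z z' by simp
      then have "(z, z') \<in> RR" using R_equiv zd by (simp add: equiv_class_eq_iff)
      then obtain c where c: "c \<in> carrier G1" "z' = dl c \<otimes>\<^bsub>DD\<^esub> z" using R_iff zd by auto
      then have "z' \<in> Imd #>\<^bsub>ZZ\<^esub> z" by (auto simp: r_coset_def)
      then show "C = C'" using Z.repr_independence[of z' Imd z] z z' Imd_subgroup by simp
    qed
  qed
  show ?thesis
    apply (intro conjI)
    subgoal by (rule D_group)
    subgoal by (rule Z0_subgroup)
    subgoal by (rule H0s)
    subgoal by (rule delta_hom)
    subgoal by (rule ker)
    subgoal by (rule R_equiv)
    subgoal by (rule row1)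
    subgoal by (auto simp: H1_def quotient_def)
    subgoal using H0s pi1 by simp
    subgoal by (rule delta_hom_Z)
    subgoal using ker pi1 by simp
    subgoal by (rule row2)
    subgoal by (auto simp: pi0_def RCOSETS_def simp del: Z_carrier)
    subgoal using iso by (intro exI[of _ "\<lambda>c. c"]) simp
    subgoal using Z0_sub by simp
    subgoal using delta_Z0 by simp
    subgoal using psi by (intro exI[of _ "\<lambda>C. RR `` C"]) simp
    done
qed

end

theorem lemma3p11:
  fixes G1 :: "('a, 'c) monoid_scheme" and G0 :: "('b, 'd) monoid_scheme"
    and bd :: "'a \<Rightarrow> 'b" and act :: "'b \<Rightarrow> 'a \<Rightarrow> 'a"
  assumes "crossed_module G1 G0 bd act"
  defines "D \<equiv> DerGrp G1 G0 bd act"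
      and "\<delta> \<equiv> delta G1 G0 bd act"
      and "R \<equiv> der_rel G1 G0 bd act"
      and "Z \<equiv> Z0Grp G1 G0 bd act"
      and "Im\<delta> \<equiv> delta G1 G0 bd act ` carrier G1"
  shows
    \<comment> \<open>Der is a group and Z0 is a subgroup\<close>
    "group D \<and> subgroup (Z0 G1 G0 bd act) D
     \<comment> \<open>first row: 0 -> H0 -> G1 -> Der -> H1 -> 1 exact\<close>
     \<and> H0 G1 G0 bd act \<subseteq> carrier G1
     \<and> \<delta> \<in> hom G1 D
     \<and> {c \<in> carrier G1. \<delta> c = \<one>\<^bsub>D\<^esub>} = H0 G1 G0 bd act
     \<and> equiv (carrier D) R
     \<and> {d \<in> carrier D. R `` {d} = R `` {\<one>\<^bsub>D\<^esub>}} = Im\<delta>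
     \<and> (\<lambda>d. R `` {d}) ` carrier D = H1 G1 G0 bd act
     \<comment> \<open>second row: 0 -> pi1 -> G1 -> Z0 -> pi0 -> 1 exact\<close>
     \<and> pi1 G1 G0 bd act \<subseteq> carrier G1
     \<and> \<delta> \<in> hom G1 Z
     \<and> {c \<in> carrier G1. \<delta> c = \<one>\<^bsub>Z\<^esub>} = pi1 G1 G0 bd act
     \<and> {z \<in> carrier Z. Im\<delta> #>\<^bsub>Z\<^esub> z = Im\<delta> #>\<^bsub>Z\<^esub> \<one>\<^bsub>Z\<^esub>} = Im\<delta>
     \<and> (\<lambda>z. Im\<delta> #>\<^bsub>Z\<^esub> z) ` carrier Z = pi0 G1 G0 bd act
     \<comment> \<open>vertical maps: isomorphism pi1 = H0 compatible with the identity of G1,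
         inclusion Z0 into Der, and an injective map pi0 -> H1 making the square commute\<close>
     \<and> (\<exists>\<phi>. \<phi> \<in> iso (G1\<lparr>carrier := pi1 G1 G0 bd act\<rparr>) (G1\<lparr>carrier := H0 G1 G0 bd act\<rparr>)
            \<and> (\<forall>c \<in> pi1 G1 G0 bd act. \<phi> c = c))
     \<and> carrier Z \<subseteq> carrier D
     \<and> (\<forall>c \<in> carrier G1. \<delta> c \<in> carrier Z)
     \<and> (\<exists>\<psi>. inj_on \<psi> (pi0 G1 G0 bd act) \<and> \<psi> ` pi0 G1 G0 bd act \<subseteq> H1 G1 G0 bd act
            \<and> (\<forall>z \<in> carrier Z. \<psi> (Im\<delta> #>\<^bsub>Z\<^esub> z) = R `` {z}))"
proof -
  interpret xmod G1 G0 bd act by (rule xmodI[OF assms(1)])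
  show ?thesis unfolding D_def \<delta>_def R_def Z_def Im\<delta>_def by (rule main)
qed

end
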